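(* Let $R$ be a commutative ring in which $2$ is invertible and let $Q$ be a free $R$-module of rank $n$ with a fixed ordered basis. Let $\varphi'$ and $\varphi^*$ be invertible symmetric $n\times n$ matrices defining quadratic forms on $Q$, with $\varphi'=\epsilon^t\varphi^*\epsilon$ for some $\epsilon\in\mathrm{GL}_n(R)$. Let $M=Q\perp\mathbb{H}(R)$, with ordered basis the basis of $Q$ followed by $x,f$, and endow $M$ with the forms of matrices $\varphi'\perp\psi_1$ and $\varphi^*\perp\psi_1$ respectively, where $\psi_1=\begin{pmatrix}0&1\\1&0\end{pmatrix}$. Then, as groups of $(n+2)\times(n+2)$ matrices, $\mathrm{ETransO}(M,\langle\,,\,\rangle_{\varphi'\perp\psi_1})=(\epsilon^{-1}\perp I_2)\,\mathrm{ETransO}(M,\langle\,,\,\rangle_{\varphi^*\perp\psi_1})\,(\epsilon\perp I_2)$.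
   Context: For an invertible symmetric matrix $\varphi$ on $Q$, $\langle a,b\rangle_\varphi=a^t\varphi b$ in coordinates and $q_\varphi(a)=\tfrac12\langle a,a\rangle_\varphi$. $\mathbb{H}(R)=Rx\oplus Rf$ with $\langle x,f\rangle=1$, $\langle x,x\rangle=\langle f,f\rangle=0$. For the form $\varphi\perp\psi_1$ on $M$ and $w\in Q$, writing elements as $(z,ax+bf)$, the elementary orthogonal transvections are $E^w_1(z,ax+bf)=(z-bw,\,(a+\langle z,w\rangle_\varphi-bq_\varphi(w))x+bf)$ and $E^w_2(z,ax+bf)=(z-aw,\,ax+(b+\langle z,w\rangle_\varphi-aq_\varphi(w))f)$; $\mathrm{ETransO}(M,\langle\,,\,\rangle_{\varphi\perp\psi_1})$ is the group generated by all $E^w_1,E^w_2$, $w\in Q$. *)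

theory Defs
  imports "Jordan_Normal_Form.Matrix"
begin

definition half :: "'a::comm_ring_1" where
  "half = (SOME h. 2 * h = 1)"

definition bil :: "'a::comm_ring_1 mat \<Rightarrow> 'a vec \<Rightarrow> 'a vec \<Rightarrow> 'a" where
  "bil phi a b = a \<bullet> (phi *\<^sub>v b)"

definition qf :: "'a::comm_ring_1 mat \<Rightarrow> 'a vec \<Rightarrow> 'a" where
  "qf phi a = half * bil phi a a"

text \<open>Elements of M = Q \<perp> H(R) are vectors of length n+2: first n coordinates z,
  then the coefficients a (of x) and b (of f).\<close>
definition zpart :: "nat \<Rightarrow> 'a vec \<Rightarrow> 'a vec" where
  "zpart n v = vec n (\<lambda>i. v $ i)"

definition E1 :: "nat \<Rightarrow> 'a::comm_ring_1 mat \<Rightarrow> 'a vec \<Rightarrow> 'a vec \<Rightarrow> 'a vec" where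
  "E1 n phi w v = (let z = zpart n v; a = v $ n; b = v $ (n+1) in
     (z - b \<cdot>\<^sub>v w) @\<^sub>v vec 2 (\<lambda>i. if i = 0 then a + bil phi z w - b * qf phi w else b))"

definition E2 :: "nat \<Rightarrow> 'a::comm_ring_1 mat \<Rightarrow> 'a vec \<Rightarrow> 'a vec \<Rightarrow> 'a vec" where
  "E2 n phi w v = (let z = zpart n v; a = v $ n; b = v $ (n+1) in
     (z - a \<cdot>\<^sub>v w) @\<^sub>v vec 2 (\<lambda>i. if i = 0 then a else b + bil phi z w - a * qf phi w))"

definition mat_of_map :: "nat \<Rightarrow> ('a::zero_neq_one vec \<Rightarrow> 'a vec) \<Rightarrow> 'a mat" where
  "mat_of_map N f = mat N N (\<lambda>(i, j). f (unit_vec N j) $ i)"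

inductive_set gen_group :: "nat \<Rightarrow> 'a::comm_ring_1 mat set \<Rightarrow> 'a mat set"
  for N :: nat and S :: "'a mat set" where
  gen_one: "1\<^sub>m N \<in> gen_group N S"
| gen_gen: "s \<in> S \<Longrightarrow> s \<in> gen_group N S"
| gen_mult: "g \<in> gen_group N S \<Longrightarrow> h \<in> gen_group N S \<Longrightarrow> g * h \<in> gen_group N S"
| gen_inv: "g \<in> gen_group N S \<Longrightarrow> h \<in> carrier_mat N N \<Longrightarrow> g * h = 1\<^sub>m N \<Longrightarrow> h * g = 1\<^sub>m N
            \<Longrightarrow> h \<in> gen_group N S"

definition ETransO :: "nat \<Rightarrow> 'a::comm_ring_1 mat \<Rightarrow> 'a mat set" where
  "ETransO n phi = gen_group (n+2)
     ({mat_of_map (n+2) (E1 n phi w) | w. w \<in> carrier_vec n} \<union>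
      {mat_of_map (n+2) (E2 n phi w) | w. w \<in> carrier_vec n})"

definition perpI2 :: "nat \<Rightarrow> 'a::comm_ring_1 mat \<Rightarrow> 'a mat" where
  "perpI2 n A = four_block_mat A (0\<^sub>m n 2) (0\<^sub>m 2 n) (1\<^sub>m 2)"

end

theory Submission
  imports Defs
begin


lemma gen_group_carrier:
  assumes "S \<subseteq> carrier_mat N N"
  shows "g \<in> gen_group N S \<Longrightarrow> g \<in> carrier_mat N N"
  by (induction rule: gen_group.induct) (use assms in auto)

lemma conj_gen:
  assumes S: "S \<subseteq> carrier_mat N N" and P: "P \<in> carrier_mat N N" and Q: "Q \<in> carrier_mat N N"
    and PQ: "P * Q = 1\<^sub>m N" and QP: "Q * P = 1\<^sub>m N"
  shows "g \<in> gen_group N S \<Longrightarrow> Q * g * P \<in> gen_group N ((\<lambda>s. Q * s * P) ` S)"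
proof (induction rule: gen_group.induct)
  case gen_one
  then show ?case using QP Q by (simp add: gen_group.gen_one)
next
  case (gen_gen s)
  then show ?case by (intro gen_group.gen_gen) auto
next
  case (gen_mult g h)
  have g: "g \<in> carrier_mat N N" and h: "h \<in> carrier_mat N N"
    using gen_mult.hyps gen_group_carrier[OF S] by auto
  have "Q * (g * h) * P = (Q * g * P) * (Q * h * P)"
  proof -
    have "(Q * g * P) * (Q * h * P) = Q * g * (P * Q) * h * P"
      using g h P Q by (simp add: assoc_mult_mat[of _ N N _ N _ N])
    also have "\<dots> = Q * (g * h) * P" using g h P Q PQ by (simp add: assoc_mult_mat[of _ N N _ N _ N])
    finally show ?thesis by simp
  qed
  then show ?case using gen_mult.IH by (simp add: gen_group.gen_mult)
next
  case (gen_inv g h)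
  have g: "g \<in> carrier_mat N N" and h: "h \<in> carrier_mat N N"
    using gen_inv.hyps gen_group_carrier[OF S] by auto
  have 1: "(Q * g * P) * (Q * h * P) = 1\<^sub>m N"
  proof -
    have "(Q * g * P) * (Q * h * P) = Q * g * (P * Q) * h * P"
      using g h P Q by (simp add: assoc_mult_mat[of _ N N _ N _ N])
    also have "\<dots> = Q * (g * h) * P" using g h P Q PQ by (simp add: assoc_mult_mat[of _ N N _ N _ N])
    finally show ?thesis using gen_inv.hyps QP Q by simp
  qed
  have 2: "(Q * h * P) * (Q * g * P) = 1\<^sub>m N"
  proof -
    have "(Q * h * P) * (Q * g * P) = Q * h * (P * Q) * g * P"
      using g h P Q by (simp add: assoc_mult_mat[of _ N N _ N _ N])
    also have "\<dots> = Q * (h * g) * P" using g h P Q PQ by (simp add: assoc_mult_mat[of _ N N _ N _ N])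
    finally show ?thesis using gen_inv.hyps QP Q by simp
  qed
  show ?case by (rule gen_group.gen_inv[OF gen_inv.IH _ 1 2]) (use h P Q in auto)
qed

lemma mat_eq_by_vec:
  fixes A B :: "'a::comm_ring_1 mat"
  assumes "A \<in> carrier_mat N N" "B \<in> carrier_mat N N"
    and "\<And>v. v \<in> carrier_vec N \<Longrightarrow> A *\<^sub>v v = B *\<^sub>v v"
  shows "A = B"
proof (rule eq_matI)
  fix i j assume ij: "i < dim_row B" "j < dim_col B"
  have "A *\<^sub>v unit_vec N j = B *\<^sub>v unit_vec N j" by (rule assms(3)) simp
  then have "(A *\<^sub>v unit_vec N j) $ i = (B *\<^sub>v unit_vec N j) $ i" by simp
  moreover have "(A *\<^sub>v unit_vec N j) $ i = A $$ (i, j)"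
    using ij assms(1,2) by (simp add: scalar_prod_right_unit[of j N])
  moreover have "(B *\<^sub>v unit_vec N j) $ i = B $$ (i, j)"
    using ij assms(1,2) by (simp add: scalar_prod_right_unit[of j N])
  ultimately show "A $$ (i, j) = B $$ (i, j)" by simp
qed (use assms in auto)
definition M1 :: "nat \<Rightarrow> 'a::comm_ring_1 mat \<Rightarrow> 'a vec \<Rightarrow> 'a mat" where
  "M1 n phi w = mat (n+2) (n+2) (\<lambda>(i,j).
     if i < n then (if j = i then 1 else 0) - (if j = n+1 then w$i else 0)
     else if i = n then (if j < n then (phi *\<^sub>v w)$j else 0) + (if j = n then 1 else 0)
        - (if j = n+1 then qf phi w else 0)
     else (if j = n+1 then 1 else 0))"

definition M2 :: "nat \<Rightarrow> 'a::comm_ring_1 mat \<Rightarrow> 'a vec \<Rightarrow> 'a mat" where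
  "M2 n phi w = mat (n+2) (n+2) (\<lambda>(i,j).
     if i < n then (if j = i then 1 else 0) - (if j = n then w$i else 0)
     else if i = n then (if j = n then 1 else 0)
     else (if j < n then (phi *\<^sub>v w)$j else 0) + (if j = n+1 then 1 else 0)
        - (if j = n then qf phi w else 0))"

lemma sum_split2: "(\<Sum>j\<in>{0..<(n::nat)+2}. f j) = (\<Sum>j\<in>{0..<n}. f j) + f n + f (n+1)"
  by (simp add: numeral_2_eq_2)

lemma sum_delta_lt: "i < n \<Longrightarrow> (\<Sum>j\<in>{0..<n}. (v $ j :: 'a::comm_ring_1) * (if j = i then 1 else 0)) = v $ i"
proof -
  assume "i < n"
  have "(\<Sum>j\<in>{0..<n}. (v $ j :: 'a::comm_ring_1) * (if j = i then 1 else 0)) = (\<Sum>j\<in>{0..<n}. if j = i then v $ j else 0)"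
    by (rule sum.cong) auto
  also have "\<dots> = v $ i" using \<open>i < n\<close> by (simp add: sum.delta')
  finally show ?thesis .
qed

lemma M1_carr[simp]: "M1 n phi w \<in> carrier_mat (n+2) (n+2)" by (simp add: M1_def)
lemma M2_carr[simp]: "M2 n phi w \<in> carrier_mat (n+2) (n+2)" by (simp add: M2_def)

lemma E1_M1:
  assumes w: "w \<in> carrier_vec n" and phi: "phi \<in> carrier_mat n n" and v: "v \<in> carrier_vec (n+2)"
  shows "E1 n phi w v = M1 n phi w *\<^sub>v v"
proof (rule eq_vecI)
  fix i assume "i < dim_vec (M1 n phi w *\<^sub>v v)" hence i: "i < n+2" by (simp add: M1_def)
  have e: "(M1 n phi w *\<^sub>v v) $ i = (\<Sum>j\<in>{0..<n+2}. M1 n phi w $$ (i,j) * v$j)"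
    using i v by (simp add: mult_mat_vec_def scalar_prod_def M1_def)
  have b: "bil phi (zpart n v) w = (\<Sum>j\<in>{0..<n}. (phi *\<^sub>v w) $ j * v $ j)"
    using phi w by (simp add: bil_def scalar_prod_def zpart_def mult.commute)
  consider "i < n" | "i = n" | "i = n+1" using i by linarith
  then show "E1 n phi w v $ i = (M1 n phi w *\<^sub>v v) $ i"
  proof cases
    case 1
    then show ?thesis unfolding e sum_split2 using w v
      by (simp add: M1_def E1_def zpart_def Let_def sum_delta_lt algebra_simps)
  next
    case 2
    then show ?thesis unfolding e sum_split2 using w v b
      by (simp add: M1_def E1_def zpart_def Let_def algebra_simps)
  next
    case 3
    then show ?thesis unfolding e sum_split2 using w v
      by (simp add: M1_def E1_def zpart_def Let_def algebra_simps)
  qed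
qed (use w v in \<open>simp add: M1_def E1_def zpart_def Let_def\<close>)

lemma E2_M2:
  assumes w: "w \<in> carrier_vec n" and phi: "phi \<in> carrier_mat n n" and v: "v \<in> carrier_vec (n+2)"
  shows "E2 n phi w v = M2 n phi w *\<^sub>v v"
proof (rule eq_vecI)
  fix i assume "i < dim_vec (M2 n phi w *\<^sub>v v)" hence i: "i < n+2" by (simp add: M2_def)
  have e: "(M2 n phi w *\<^sub>v v) $ i = (\<Sum>j\<in>{0..<n+2}. M2 n phi w $$ (i,j) * v$j)"
    using i v by (simp add: mult_mat_vec_def scalar_prod_def M2_def)
  have b: "bil phi (zpart n v) w = (\<Sum>j\<in>{0..<n}. (phi *\<^sub>v w) $ j * v $ j)"
    using phi w by (simp add: bil_def scalar_prod_def zpart_def mult.commute)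
  consider "i < n" | "i = n" | "i = n+1" using i by linarith
  then show "E2 n phi w v $ i = (M2 n phi w *\<^sub>v v) $ i"
  proof cases
    case 1
    then show ?thesis unfolding e sum_split2 using w v
      by (simp add: M2_def E2_def zpart_def Let_def sum_delta_lt algebra_simps)
  next
    case 2
    then show ?thesis unfolding e sum_split2 using w v
      by (simp add: M2_def E2_def zpart_def Let_def algebra_simps)
  next
    case 3
    then show ?thesis unfolding e sum_split2 using w v b
      by (simp add: M2_def E2_def zpart_def Let_def algebra_simps)
  qed
qed (use w v in \<open>simp add: M2_def E2_def zpart_def Let_def\<close>)

lemma mat_of_map_E1: assumes "w \<in> carrier_vec n" "phi \<in> carrier_mat n n"
  shows "mat_of_map (n+2) (E1 n phi w) = M1 n phi w"
proof (rule eq_matI)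
  fix i j assume ij: "i < dim_row (M1 n phi w)" "j < dim_col (M1 n phi w)"
  have "E1 n phi w (unit_vec (n+2) j) = M1 n phi w *\<^sub>v unit_vec (n+2) j"
    by (rule E1_M1) (use assms in auto)
  moreover have "(M1 n phi w *\<^sub>v unit_vec (n+2) j) $ i = M1 n phi w $$ (i,j)"
    using ij by (simp add: scalar_prod_right_unit[of j "n+2"] M1_def)
  ultimately show "mat_of_map (n+2) (E1 n phi w) $$ (i, j) = M1 n phi w $$ (i, j)"
    using ij by (simp add: mat_of_map_def M1_def)
qed (auto simp: mat_of_map_def M1_def)

lemma mat_of_map_E2: assumes "w \<in> carrier_vec n" "phi \<in> carrier_mat n n"
  shows "mat_of_map (n+2) (E2 n phi w) = M2 n phi w"
proof (rule eq_matI)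
  fix i j assume ij: "i < dim_row (M2 n phi w)" "j < dim_col (M2 n phi w)"
  have "E2 n phi w (unit_vec (n+2) j) = M2 n phi w *\<^sub>v unit_vec (n+2) j"
    by (rule E2_M2) (use assms in auto)
  moreover have "(M2 n phi w *\<^sub>v unit_vec (n+2) j) $ i = M2 n phi w $$ (i,j)"
    using ij by (simp add: scalar_prod_right_unit[of j "n+2"] M2_def)
  ultimately show "mat_of_map (n+2) (E2 n phi w) $$ (i, j) = M2 n phi w $$ (i, j)"
    using ij by (simp add: mat_of_map_def M2_def)
qed (auto simp: mat_of_map_def M2_def)

lemma mat_vec_smult:
  fixes A :: "'a::comm_ring_1 mat"
  assumes "A \<in> carrier_mat m n" "v \<in> carrier_vec n"
  shows "A *\<^sub>v (k \<cdot>\<^sub>v v) = k \<cdot>\<^sub>v (A *\<^sub>v v)"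
  by (rule eq_vecI) (use assms in auto)

lemma bil_transform:
  fixes phi eps :: "'a::comm_ring_1 mat"
  assumes phi: "phi \<in> carrier_mat n n" and eps: "eps \<in> carrier_mat n n"
    and z: "z \<in> carrier_vec n" and w: "w \<in> carrier_vec n"
  shows "bil (transpose_mat eps * phi * eps) z w = bil phi (eps *\<^sub>v z) (eps *\<^sub>v w)"
proof -
  let ?u = "phi *\<^sub>v (eps *\<^sub>v w)"
  have u: "?u \<in> carrier_vec n" using phi eps w by auto
  have "(transpose_mat eps * phi * eps) *\<^sub>v w = transpose_mat eps *\<^sub>v ?u"
    using phi eps w by (simp add: assoc_mult_mat_vec[of _ n n _ n])
  then have "bil (transpose_mat eps * phi * eps) z w = z \<bullet> (transpose_mat eps *\<^sub>v ?u)"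
    by (simp add: bil_def)
  also have "\<dots> = (transpose_mat eps *\<^sub>v ?u) \<bullet> z"
    by (rule comm_scalar_prod[of _ n]) (use z eps u in auto)
  also have "\<dots> = ?u \<bullet> (eps *\<^sub>v z)"
    by (rule transpose_vec_mult_scalar[OF eps z u])
  also have "\<dots> = (eps *\<^sub>v z) \<bullet> ?u"
    by (rule comm_scalar_prod[of _ n]) (use z eps u in auto)
  finally show ?thesis by (simp add: bil_def)
qed

lemma zpart_append: "x \<in> carrier_vec n \<Longrightarrow> zpart n (x @\<^sub>v t) = x"
  by (rule eq_vecI) (auto simp: zpart_def)

lemma conj_E:
  fixes phi eps eps_inv :: "'a::comm_ring_1 mat"
  assumes phi: "phi \<in> carrier_mat n n" and eps: "eps \<in> carrier_mat n n"
    and epsi: "eps_inv \<in> carrier_mat n n" and e1: "eps_inv * eps = 1\<^sub>m n"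
    and w: "w \<in> carrier_vec n" and v: "v \<in> carrier_vec (n+2)"
  shows "perpI2 n eps_inv *\<^sub>v (E1 n phi (eps *\<^sub>v w) (perpI2 n eps *\<^sub>v v))
           = E1 n (transpose_mat eps * phi * eps) w v"
    and "perpI2 n eps_inv *\<^sub>v (E2 n phi (eps *\<^sub>v w) (perpI2 n eps *\<^sub>v v))
           = E2 n (transpose_mat eps * phi * eps) w v"
proof -
  define z where "z = vec_first v n"
  define t where "t = vec_last v 2"
  have z: "z \<in> carrier_vec n" and t: "t \<in> carrier_vec 2" by (auto simp: z_def t_def)
  have vzt: "v = z @\<^sub>v t" using v by (simp add: z_def t_def)
  have ez: "eps *\<^sub>v z \<in> carrier_vec n" and ew: "eps *\<^sub>v w \<in> carrier_vec n" using eps z w by auto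
  have Pv: "perpI2 n eps *\<^sub>v v = (eps *\<^sub>v z) @\<^sub>v t"
    unfolding vzt perpI2_def by (subst mult_mat_vec_split[OF eps _ z t]) (use t in auto)
  have inv: "\<And>x. x \<in> carrier_vec n \<Longrightarrow> eps_inv *\<^sub>v (eps *\<^sub>v x) = x"
  proof -
    fix x :: "'a vec" assume x: "x \<in> carrier_vec n"
    have "eps_inv *\<^sub>v (eps *\<^sub>v x) = (eps_inv * eps) *\<^sub>v x"
      using eps epsi x by (simp add: assoc_mult_mat_vec[of _ n n _ n])
    then show "eps_inv *\<^sub>v (eps *\<^sub>v x) = x" using e1 x by simp
  qed
  have lin: "\<And>(c::'a) x y. x \<in> carrier_vec n \<Longrightarrow> y \<in> carrier_vec n \<Longrightarrow>
     eps_inv *\<^sub>v (eps *\<^sub>v x - c \<cdot>\<^sub>v (eps *\<^sub>v y)) = x - c \<cdot>\<^sub>v y"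
  proof -
    fix c :: 'a and x y :: "'a vec" assume x: "x \<in> carrier_vec n" and y: "y \<in> carrier_vec n"
    have "eps_inv *\<^sub>v (eps *\<^sub>v x - c \<cdot>\<^sub>v (eps *\<^sub>v y)) = eps_inv *\<^sub>v (eps *\<^sub>v x) - eps_inv *\<^sub>v (c \<cdot>\<^sub>v (eps *\<^sub>v y))"
      by (rule mult_minus_distrib_mat_vec[OF epsi]) (use eps x y in auto)
    also have "\<dots> = x - c \<cdot>\<^sub>v y"
      using inv[OF x] inv[OF y] mat_vec_smult[OF epsi, of "eps *\<^sub>v y" c] eps y by simp
    finally show "eps_inv *\<^sub>v (eps *\<^sub>v x - c \<cdot>\<^sub>v (eps *\<^sub>v y)) = x - c \<cdot>\<^sub>v y" .
  qed
  have bzw: "bil (transpose_mat eps * phi * eps) z w = bil phi (eps *\<^sub>v z) (eps *\<^sub>v w)"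
    by (rule bil_transform[OF phi eps z w])
  have bww: "qf (transpose_mat eps * phi * eps) w = qf phi (eps *\<^sub>v w)"
    unfolding qf_def using bil_transform[OF phi eps w w] by simp
  have Qx: "\<And>x y. x \<in> carrier_vec n \<Longrightarrow> y \<in> carrier_vec 2 \<Longrightarrow>
      perpI2 n eps_inv *\<^sub>v (x @\<^sub>v y) = (eps_inv *\<^sub>v x) @\<^sub>v y"
    unfolding perpI2_def by (subst mult_mat_vec_split[OF epsi]) auto
  have vn: "v $ n = t $ 0" "v $ (n+1) = t $ 1" using z t unfolding vzt by auto
  have pn: "((eps *\<^sub>v z) @\<^sub>v t) $ n = t $ 0" "((eps *\<^sub>v z) @\<^sub>v t) $ (n+1) = t $ 1"
    "((eps *\<^sub>v z) @\<^sub>v t) $ Suc n = t $ 1" using eps z t by auto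
  have zp: "zpart n v = z" unfolding vzt by (rule zpart_append[OF z])
  show "perpI2 n eps_inv *\<^sub>v (E1 n phi (eps *\<^sub>v w) (perpI2 n eps *\<^sub>v v))
           = E1 n (transpose_mat eps * phi * eps) w v"
    unfolding Pv E1_def Let_def zpart_append[OF ez] zp vn
    using ez t z w ew
    by (subst Qx) (auto simp: lin bzw bww pn)
  show "perpI2 n eps_inv *\<^sub>v (E2 n phi (eps *\<^sub>v w) (perpI2 n eps *\<^sub>v v))
           = E2 n (transpose_mat eps * phi * eps) w v"
    unfolding Pv E2_def Let_def zpart_append[OF ez] zp vn
    using ez t z w ew
    by (subst Qx) (auto simp: lin bzw bww pn)
qed

lemma perpI2_mult:
  fixes A B :: "'a::comm_ring_1 mat"
  assumes "A \<in> carrier_mat n n" "B \<in> carrier_mat n n" "A * B = 1\<^sub>m n"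
  shows "perpI2 n A * perpI2 n B = 1\<^sub>m (n+2)"
proof -
  have "perpI2 n A * perpI2 n B = four_block_mat (A * B + 0\<^sub>m n 2 * 0\<^sub>m 2 n) (A * 0\<^sub>m n 2 + 0\<^sub>m n 2 * 1\<^sub>m 2)
    (0\<^sub>m 2 n * B + 1\<^sub>m 2 * 0\<^sub>m 2 n) (0\<^sub>m 2 n * 0\<^sub>m n 2 + 1\<^sub>m 2 * 1\<^sub>m 2)"
    unfolding perpI2_def by (rule mult_four_block_mat) (use assms in auto)
  also have "\<dots> = four_block_mat (1\<^sub>m n) (0\<^sub>m n 2) (0\<^sub>m 2 n) (1\<^sub>m 2)"
    using assms by simp
  also have "\<dots> = 1\<^sub>m (n+2)" by simp
  finally show ?thesis .
qed

lemma perpI2_carr: "A \<in> carrier_mat n n \<Longrightarrow> perpI2 n A \<in> carrier_mat (n+2) (n+2)"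
  unfolding perpI2_def by (rule four_block_carrier_mat) auto

lemma mat_of_map_carr: "mat_of_map N f \<in> carrier_mat N N"
  by (simp add: mat_of_map_def)


theorem mainTheorem12:
  fixes n :: nat and phi' phi_s eps eps_inv :: "'a::comm_ring_1 mat"
  assumes two_unit: "(2::'a) dvd 1"
    and phi'_carr: "phi' \<in> carrier_mat n n" and phi'_sym: "transpose_mat phi' = phi'"
    and phi'_inv: "invertible_mat phi'"
    and phis_carr: "phi_s \<in> carrier_mat n n" and phis_sym: "transpose_mat phi_s = phi_s"
    and phis_inv: "invertible_mat phi_s"
    and eps_carr: "eps \<in> carrier_mat n n" and eps_inv_carr: "eps_inv \<in> carrier_mat n n"
    and eps_inv1: "eps * eps_inv = 1\<^sub>m n" and eps_inv2: "eps_inv * eps = 1\<^sub>m n"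
    and rel: "phi' = transpose_mat eps * phi_s * eps"
  shows "ETransO n phi' =
         {perpI2 n eps_inv * g * perpI2 n eps | g. g \<in> ETransO n phi_s}"
proof -
  define P where "P = perpI2 n eps"
  define Q where "Q = perpI2 n eps_inv"
  define N where "N = n + 2"
  have P: "P \<in> carrier_mat N N" and Q: "Q \<in> carrier_mat N N"
    using perpI2_carr eps_carr eps_inv_carr by (auto simp: P_def Q_def N_def)
  have PQ: "P * Q = 1\<^sub>m N" and QP: "Q * P = 1\<^sub>m N"
    using perpI2_mult eps_carr eps_inv_carr eps_inv1 eps_inv2 by (auto simp: P_def Q_def N_def)
  define S where "S phi = {mat_of_map N (E1 n phi w) | w. w \<in> carrier_vec n} \<union>
      {mat_of_map N (E2 n phi w) | w. w \<in> carrier_vec n}" for phi :: "'a mat"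
  have ET: "ETransO n phi = gen_group N (S phi)" for phi
    by (simp add: ETransO_def S_def N_def)
  have Scarr: "S phi \<subseteq> carrier_mat N N" for phi
    by (auto simp: S_def mat_of_map_carr)
  have conj1: "mat_of_map N (E1 n phi' w) = Q * mat_of_map N (E1 n phi_s (eps *\<^sub>v w)) * P"
    and conj2: "mat_of_map N (E2 n phi' w) = Q * mat_of_map N (E2 n phi_s (eps *\<^sub>v w)) * P"
    if w: "w \<in> carrier_vec n" for w
  proof -
    have ew: "eps *\<^sub>v w \<in> carrier_vec n" using eps_carr w by auto
    show "mat_of_map N (E1 n phi' w) = Q * mat_of_map N (E1 n phi_s (eps *\<^sub>v w)) * P"
      unfolding N_def mat_of_map_E1[OF w phi'_carr] mat_of_map_E1[OF ew phis_carr]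
    proof (rule mat_eq_by_vec)
      fix v :: "'a vec" assume v: "v \<in> carrier_vec (n+2)"
      have "(Q * M1 n phi_s (eps *\<^sub>v w) * P) *\<^sub>v v = Q *\<^sub>v (M1 n phi_s (eps *\<^sub>v w) *\<^sub>v (P *\<^sub>v v))"
      proof -
        have c: "M1 n phi_s (eps *\<^sub>v w) \<in> carrier_mat (n+2) (n+2)" by (rule M1_carr M2_carr)
        have "(Q * M1 n phi_s (eps *\<^sub>v w) * P) *\<^sub>v v = (Q * M1 n phi_s (eps *\<^sub>v w)) *\<^sub>v (P *\<^sub>v v)"
          by (rule assoc_mult_mat_vec) (use P Q c v in \<open>auto simp: N_def\<close>)
        also have "\<dots> = Q *\<^sub>v (M1 n phi_s (eps *\<^sub>v w) *\<^sub>v (P *\<^sub>v v))"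
          by (rule assoc_mult_mat_vec) (use P Q c v in \<open>auto simp: N_def\<close>)
        finally show ?thesis .
      qed
      also have "\<dots> = Q *\<^sub>v (E1 n phi_s (eps *\<^sub>v w) (P *\<^sub>v v))"
        using E1_M1[OF ew phis_carr, of "P *\<^sub>v v"] P v by (simp add: N_def)
      also have "\<dots> = E1 n phi' w v" unfolding P_def Q_def rel
        by (rule conj_E(1)[OF phis_carr eps_carr eps_inv_carr eps_inv2 w v])
      also have "\<dots> = M1 n phi' w *\<^sub>v v" by (rule E1_M1[OF w phi'_carr v])
      finally show "M1 n phi' w *\<^sub>v v = (Q * M1 n phi_s (eps *\<^sub>v w) * P) *\<^sub>v v" by simp
    qed (use P Q M1_carr[of n phi' w] M1_carr[of n phi_s "eps *\<^sub>v w"] in \<open>auto simp: N_def\<close>)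
    show "mat_of_map N (E2 n phi' w) = Q * mat_of_map N (E2 n phi_s (eps *\<^sub>v w)) * P"
      unfolding N_def mat_of_map_E2[OF w phi'_carr] mat_of_map_E2[OF ew phis_carr]
    proof (rule mat_eq_by_vec)
      fix v :: "'a vec" assume v: "v \<in> carrier_vec (n+2)"
      have "(Q * M2 n phi_s (eps *\<^sub>v w) * P) *\<^sub>v v = Q *\<^sub>v (M2 n phi_s (eps *\<^sub>v w) *\<^sub>v (P *\<^sub>v v))"
      proof -
        have c: "M2 n phi_s (eps *\<^sub>v w) \<in> carrier_mat (n+2) (n+2)" by (rule M1_carr M2_carr)
        have "(Q * M2 n phi_s (eps *\<^sub>v w) * P) *\<^sub>v v = (Q * M2 n phi_s (eps *\<^sub>v w)) *\<^sub>v (P *\<^sub>v v)"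
          by (rule assoc_mult_mat_vec) (use P Q c v in \<open>auto simp: N_def\<close>)
        also have "\<dots> = Q *\<^sub>v (M2 n phi_s (eps *\<^sub>v w) *\<^sub>v (P *\<^sub>v v))"
          by (rule assoc_mult_mat_vec) (use P Q c v in \<open>auto simp: N_def\<close>)
        finally show ?thesis .
      qed
      also have "\<dots> = Q *\<^sub>v (E2 n phi_s (eps *\<^sub>v w) (P *\<^sub>v v))"
        using E2_M2[OF ew phis_carr, of "P *\<^sub>v v"] P v by (simp add: N_def)
      also have "\<dots> = E2 n phi' w v" unfolding P_def Q_def rel
        by (rule conj_E(2)[OF phis_carr eps_carr eps_inv_carr eps_inv2 w v])
      also have "\<dots> = M2 n phi' w *\<^sub>v v" by (rule E2_M2[OF w phi'_carr v])
      finally show "M2 n phi' w *\<^sub>v v = (Q * M2 n phi_s (eps *\<^sub>v w) * P) *\<^sub>v v" by simp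
    qed (use P Q M2_carr[of n phi' w] M2_carr[of n phi_s "eps *\<^sub>v w"] in \<open>auto simp: N_def\<close>)
  qed
  have ee: "eps *\<^sub>v (eps_inv *\<^sub>v u) = u" if u: "u \<in> carrier_vec n" for u
  proof -
    have "eps *\<^sub>v (eps_inv *\<^sub>v u) = (eps * eps_inv) *\<^sub>v u"
      using eps_carr eps_inv_carr u by (simp add: assoc_mult_mat_vec[of _ n n _ n])
    then show ?thesis using eps_inv1 u by simp
  qed
  have Seq: "S phi' = (\<lambda>s. Q * s * P) ` S phi_s"
  proof
    show "S phi' \<subseteq> (\<lambda>s. Q * s * P) ` S phi_s"
    proof
      fix s assume "s \<in> S phi'"
      then obtain w where w: "w \<in> carrier_vec n" and
        "s = mat_of_map N (E1 n phi' w) \<or> s = mat_of_map N (E2 n phi' w)"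
        by (auto simp: S_def)
      moreover have "eps *\<^sub>v w \<in> carrier_vec n" using w eps_carr by auto
      ultimately show "s \<in> (\<lambda>s. Q * s * P) ` S phi_s"
        using conj1[OF w] conj2[OF w] unfolding S_def by blast
    qed
  next
    show "(\<lambda>s. Q * s * P) ` S phi_s \<subseteq> S phi'"
    proof
      fix s assume "s \<in> (\<lambda>s. Q * s * P) ` S phi_s"
      then obtain u where u: "u \<in> carrier_vec n" and
        "s = Q * mat_of_map N (E1 n phi_s u) * P \<or> s = Q * mat_of_map N (E2 n phi_s u) * P"
        by (auto simp: S_def)
      moreover have w: "eps_inv *\<^sub>v u \<in> carrier_vec n" using u eps_inv_carr by auto
      ultimately show "s \<in> S phi'"
        using conj1[OF w] conj2[OF w] ee[OF u] unfolding S_def by auto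
    qed
  qed
  have bk: "(\<lambda>s. P * s * Q) ` S phi' = S phi_s"
  proof -
    have "P * (Q * s * P) * Q = s" if "s \<in> S phi_s" for s
    proof -
      have s: "s \<in> carrier_mat N N" using that Scarr by auto
      have "P * (Q * s * P) * Q = (P * Q) * s * (P * Q)"
        using P Q s by (simp add: assoc_mult_mat[of _ N N _ N _ N])
      then show ?thesis using PQ s by simp
    qed
    then show ?thesis unfolding Seq image_image by simp
  qed
  show ?thesis
  proof
    show "ETransO n phi' \<subseteq> {perpI2 n eps_inv * g * perpI2 n eps | g. g \<in> ETransO n phi_s}"
    proof
      fix g assume "g \<in> ETransO n phi'"
      then have g: "g \<in> gen_group N (S phi')" by (simp add: ET)
      have gc: "g \<in> carrier_mat N N" using gen_group_carrier[OF Scarr g] .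
      have "P * g * Q \<in> gen_group N ((\<lambda>s. P * s * Q) ` S phi')"
        by (rule conj_gen[OF Scarr Q P QP PQ g])
      then have h: "P * g * Q \<in> ETransO n phi_s" unfolding bk ET .
      have "Q * (P * g * Q) * P = (Q * P) * g * (Q * P)"
        using P Q gc by (simp add: assoc_mult_mat[of _ N N _ N _ N])
      then have "g = Q * (P * g * Q) * P" using QP gc by simp
      then show "g \<in> {perpI2 n eps_inv * g * perpI2 n eps | g. g \<in> ETransO n phi_s}"
        using h unfolding P_def Q_def by blast
    qed
  next
    show "{perpI2 n eps_inv * g * perpI2 n eps | g. g \<in> ETransO n phi_s} \<subseteq> ETransO n phi'"
    proof
      fix x assume "x \<in> {perpI2 n eps_inv * g * perpI2 n eps | g. g \<in> ETransO n phi_s}"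
      then obtain g where x: "x = Q * g * P" and g: "g \<in> gen_group N (S phi_s)"
        by (auto simp: P_def Q_def ET)
      have "Q * g * P \<in> gen_group N ((\<lambda>s. Q * s * P) ` S phi_s)"
        by (rule conj_gen[OF Scarr P Q PQ QP g])
      then show "x \<in> ETransO n phi'" unfolding x ET Seq .
    qed
  qed
qed

end
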